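(* Let $\lambda=2\cos(\pi/5)$ and let $H_5$ be the subgroup of $SL(2,\mathbb R)$ generated by $S=\begin{pmatrix}0&1\\-1&0\end{pmatrix}$ and $T=\begin{pmatrix}1&\lambda\\0&1\end{pmatrix}$. Let $p$ be an odd rational prime. Suppose that $H(p)$ contains an element $\sigma$ with $\sigma\equiv\begin{pmatrix}1&p\\0&1\end{pmatrix}\pmod{p^2}$. Then $[H(p^n):H(p^{n+1})]=p^6$ for every positive integer $n$, and $[H_5:H(p^n)]=p^{6(n-1)}[H_5:H(p)]$ for every positive integer $n$.
   Context: For $\alpha\in\mathbb Z[\lambda]$, $H(\alpha)=\{(a_{ij})\in H_5 : a_{11}-1,\ a_{22}-1,\ a_{12},\ a_{21}\in \alpha\mathbb Z[\lambda]\}$. Congruence of matrices modulo $p^2$ means entrywise congruence modulo the ideal $p^2\mathbb Z[\lambda]$. *)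

theory Defs
  imports "HOL-Analysis.Analysis"
begin

definition mat2 :: "real \<Rightarrow> real \<Rightarrow> real \<Rightarrow> real \<Rightarrow> real^2^2" where
  "mat2 a b c d = (\<chi> i j. if i = 1 then (if j = 1 then a else b) else (if j = 1 then c else d))"

definition lam :: real where "lam = 2 * cos (pi / 5)"

definition Smat :: "real^2^2" where "Smat = mat2 0 1 (-1) 0"
definition Tmat :: "real^2^2" where "Tmat = mat2 1 lam 0 1"

inductive_set H5 :: "(real^2^2) set" where
  H5_one: "mat 1 \<in> H5"
| H5_S: "A \<in> H5 \<Longrightarrow> A ** Smat \<in> H5"
| H5_Sinv: "A \<in> H5 \<Longrightarrow> A ** matrix_inv Smat \<in> H5"
| H5_T: "A \<in> H5 \<Longrightarrow> A ** Tmat \<in> H5"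
| H5_Tinv: "A \<in> H5 \<Longrightarrow> A ** matrix_inv Tmat \<in> H5"

definition Zlam :: "real set" where
  "Zlam = {of_int a + of_int b * lam | a b. True}"

definition ideal_gen :: "real \<Rightarrow> real set" where
  "ideal_gen \<alpha> = {\<alpha> * x | x. x \<in> Zlam}"

definition Hcong :: "real \<Rightarrow> (real^2^2) set" where
  "Hcong \<alpha> = {A \<in> H5. A$1$1 - 1 \<in> ideal_gen \<alpha> \<and> A$2$2 - 1 \<in> ideal_gen \<alpha>
                    \<and> A$1$2 \<in> ideal_gen \<alpha> \<and> A$2$1 \<in> ideal_gen \<alpha>}"

definition mat_cong :: "real \<Rightarrow> real^2^2 \<Rightarrow> real^2^2 \<Rightarrow> bool" where
  "mat_cong m A B = (\<forall>i j. A$i$j - B$i$j \<in> ideal_gen m)"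

text \<open>Index [G:K] = number of (right) cosets of K in G (0 if infinite).\<close>
definition grp_index :: "(real^2^2) set \<Rightarrow> (real^2^2) set \<Rightarrow> nat" where
  "grp_index G K = card {(\<lambda>k. k ** g) ` K | g. g \<in> G}"

end

theory Submission
  imports Defs
begin


lemma lam_sq: "lam * lam = lam + 1"
proof -
  define c where "c = cos (pi/5)"
  have c2: "cos (2*pi/5) = 2*c^2 - 1" using cos_double_cos[of "pi/5"] by (simp add: c_def)
  have c4: "cos (4*pi/5) = 2*(cos (2*pi/5))^2 - 1" using cos_double_cos[of "2*pi/5"] by simp
  have h45: "4*pi/5 = pi - pi/5" by simp
  have "cos (4*pi/5) = cos (pi - pi/5)" by (simp only: h45)
  hence c4': "cos (4*pi/5) = - c" unfolding c_def by (simp only: cos_pi_minus)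
  have "- c = 2*(2*c^2-1)^2 - 1" using c2 c4 c4' by simp
  hence eq: "(c+1)*(2*c-1)*(4*c^2-2*c-1) = 0"
    by (simp add: algebra_simps power2_eq_square)
  have "cos (pi/3) < cos (pi/5)" by (rule cos_monotone_0_pi) auto
  hence cg: "c > 1/2" by (simp add: c_def cos_60)
  hence "(c+1)*(2*c-1) \<noteq> 0" by simp
  hence "4*c^2-2*c-1 = 0" using eq by simp
  thus ?thesis unfolding lam_def c_def[symmetric] by (simp add: algebra_simps power2_eq_square)
qed

lemma lam_irr: "lam \<notin> \<rat>"
proof
  assume "lam \<in> \<rat>"
  then obtain r s :: int where s: "s > 0" "coprime r s" "lam = of_int r / of_int s"
    by (auto elim: Rats_cases')
  have "(of_int r / of_int s) * (of_int r / of_int s) = (of_int r / of_int s :: real) + 1"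
    using lam_sq s(3) by simp
  hence "of_int r * of_int r = (of_int r * of_int s + of_int s * of_int s :: real)"
    using s(1) by (simp add: field_simps)
  hence "of_int (r * r) = (of_int (r * s + s * s) :: real)" by simp
  hence e: "r * r = r * s + s * s" by (simp only: of_int_eq_iff)
  hence "r * r = s * (r + s)" by (simp add: algebra_simps)
  hence "s dvd r * r" by simp
  moreover have "coprime s r" using s(2) by (rule coprime_commute[THEN iffD1])
  hence "coprime s (r*r)" by simp
  ultimately have "is_unit s" using coprime_common_divisor[OF _ dvd_refl] by blast
  hence "s = 1" using s(1) using zdvd_imp_le[of s 1] by simp
  hence "r * r = r + 1" using e by simp
  moreover have "even (r * (r - 1))" by simp
  ultimately show False by (simp add: algebra_simps)
qed

lemma lam_indep: "of_int a + of_int b * lam = of_int c + of_int d * lam \<Longrightarrow> a = c \<and> b = d"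
proof -
  assume h: "of_int a + of_int b * lam = of_int c + of_int d * lam"
  show ?thesis
  proof (cases "b = d")
    case True thus ?thesis using h by simp
  next
    case False
    hence ll: "lam = (of_int a - of_int c) / (of_int d - of_int b)" using h by (simp add: field_simps)
    have "lam \<in> \<rat>" unfolding ll by (intro Rats_divide Rats_diff Rats_of_int)
    thus ?thesis using lam_irr by simp
  qed
qed



lemma Zlam_I[intro]: "of_int a + of_int b * lam \<in> Zlam" unfolding Zlam_def by blast
lemma ZlamE: "x \<in> Zlam \<Longrightarrow> (\<And>a b. x = of_int a + of_int b * lam \<Longrightarrow> P) \<Longrightarrow> P"
  unfolding Zlam_def by blast

definition c0 :: "real \<Rightarrow> int" where "c0 x = (THE a. \<exists>b. x = of_int a + of_int b * lam)"
definition c1 :: "real \<Rightarrow> int" where "c1 x = (THE b. \<exists>a. x = of_int a + of_int b * lam)"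

lemma c0_eq[simp]: "c0 (of_int a + of_int b * lam) = a"
  unfolding c0_def by (rule the_equality) (auto dest: lam_indep)
lemma c1_eq[simp]: "c1 (of_int a + of_int b * lam) = b"
  unfolding c1_def by (rule the_equality) (auto dest: lam_indep)

lemma c01: "x \<in> Zlam \<Longrightarrow> x = of_int (c0 x) + of_int (c1 x) * lam"
  by (erule ZlamE) simp

lemma Zlam_add[intro]: "x \<in> Zlam \<Longrightarrow> y \<in> Zlam \<Longrightarrow> x + y \<in> Zlam"
proof (elim ZlamE)
  fix a b c d assume "x = of_int a + of_int b * lam" "y = of_int c + of_int d * lam"
  hence "x + y = of_int (a+c) + of_int (b+d) * lam" by (simp add: algebra_simps)
  thus "x + y \<in> Zlam" by (simp only: Zlam_I)
qed
lemma Zlam_uminus[intro]: "x \<in> Zlam \<Longrightarrow> - x \<in> Zlam"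
proof (elim ZlamE)
  fix a b assume "x = of_int a + of_int b * lam"
  hence "-x = of_int (-a) + of_int (-b) * lam" by (simp add: algebra_simps)
  thus "-x \<in> Zlam" by (simp only: Zlam_I)
qed
lemma Zlam_diff[intro]: "x \<in> Zlam \<Longrightarrow> y \<in> Zlam \<Longrightarrow> x - y \<in> Zlam"
  using Zlam_add[of x "-y"] Zlam_uminus[of y] by simp
lemma Zlam_mult[intro]: "x \<in> Zlam \<Longrightarrow> y \<in> Zlam \<Longrightarrow> x * y \<in> Zlam"
proof (elim ZlamE)
  fix a b c d assume "x = of_int a + of_int b * lam" "y = of_int c + of_int d * lam"
  hence "x * y = of_int a * of_int c + of_int b * of_int d * (lam * lam) + (of_int a * of_int d + of_int b * of_int c) * lam"
    by (simp add: algebra_simps)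
  also have "\<dots> = of_int (a*c + b*d) + of_int (a*d+b*c+b*d) * lam" unfolding lam_sq by (simp add: algebra_simps)
  finally show "x * y \<in> Zlam" by (simp only: Zlam_I)
qed
lemma Zlam_of_int[intro,simp]: "of_int n \<in> Zlam"
  using Zlam_I[of n 0] by simp
lemma Zlam_of_nat[intro,simp]: "of_nat n \<in> Zlam"
  using Zlam_of_int[of "int n"] by simp
lemma Zlam_0[intro,simp]: "0 \<in> Zlam" using Zlam_of_int[of 0] by simp
lemma Zlam_1[intro,simp]: "1 \<in> Zlam" using Zlam_of_int[of 1] by simp
lemma Zlam_lam[intro,simp]: "lam \<in> Zlam" using Zlam_I[of 0 1] by simp

lemma c_add: assumes "x \<in> Zlam" "y \<in> Zlam"
  shows "c0 (x + y) = c0 x + c0 y \<and> c1 (x + y) = c1 x + c1 y"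
proof -
  obtain a b where x: "x = of_int a + of_int b * lam" using assms(1) by (auto elim: ZlamE)
  obtain c d where y: "y = of_int c + of_int d * lam" using assms(2) by (auto elim: ZlamE)
  have "x + y = of_int (a+c) + of_int (b+d) * lam" unfolding x y by (simp add: algebra_simps)
  thus ?thesis unfolding x y by (simp only: c0_eq c1_eq)
qed
lemma c_diff: assumes "x \<in> Zlam" "y \<in> Zlam"
  shows "c0 (x - y) = c0 x - c0 y \<and> c1 (x - y) = c1 x - c1 y"
proof -
  obtain a b where x: "x = of_int a + of_int b * lam" using assms(1) by (auto elim: ZlamE)
  obtain c d where y: "y = of_int c + of_int d * lam" using assms(2) by (auto elim: ZlamE)
  have "x - y = of_int (a-c) + of_int (b-d) * lam" unfolding x y by (simp add: algebra_simps)
  thus ?thesis unfolding x y by (simp only: c0_eq c1_eq)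
qed

abbreviation Id :: "nat \<Rightarrow> real set" where "Id m \<equiv> ideal_gen (real m)"

lemma Id_iff: "m > 0 \<Longrightarrow> x \<in> Id m \<longleftrightarrow> x \<in> Zlam \<and> int m dvd c0 x \<and> int m dvd c1 x"
proof
  assume "x \<in> Id m"
  then obtain z where z: "z \<in> Zlam" "x = real m * z" unfolding ideal_gen_def by blast
  then obtain a b where "z = of_int a + of_int b * lam" by (auto elim: ZlamE)
  hence "x = of_int (int m * a) + of_int (int m * b) * lam" using z by (simp add: algebra_simps)
  thus "x \<in> Zlam \<and> int m dvd c0 x \<and> int m dvd c1 x" by (simp only: Zlam_I c0_eq c1_eq dvd_triv_left simp_thms)
next
  assume h: "x \<in> Zlam \<and> int m dvd c0 x \<and> int m dvd c1 x"
  then obtain a b where ab: "c0 x = int m * a" "c1 x = int m * b" by (auto elim!: dvdE)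
  have "x = real m * (of_int a + of_int b * lam)" using c01[of x] h ab by (simp add: algebra_simps)
  thus "x \<in> Id m" unfolding ideal_gen_def by blast
qed

lemma Id_Zlam: "x \<in> Id m \<Longrightarrow> x \<in> Zlam"
  unfolding ideal_gen_def by auto

lemma Id_scale: "z \<in> Zlam \<Longrightarrow> real m * z \<in> Id m" unfolding ideal_gen_def by blast

lemma Id_0[simp,intro]: "0 \<in> Id m" using Id_scale[of 0 m] by simp

lemma Id_add[intro]: "x \<in> Id m \<Longrightarrow> y \<in> Id m \<Longrightarrow> x + y \<in> Id m"
  unfolding ideal_gen_def apply clarify subgoal for u v
    using Zlam_add[of u v] by (rule_tac x="u+v" in exI) (simp add: algebra_simps) done
lemma Id_uminus[intro]: "x \<in> Id m \<Longrightarrow> - x \<in> Id m"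
  unfolding ideal_gen_def apply clarify subgoal for u
    using Zlam_uminus[of u] by (rule_tac x="-u" in exI) (simp add: algebra_simps) done
lemma Id_diff[intro]: "x \<in> Id m \<Longrightarrow> y \<in> Id m \<Longrightarrow> x - y \<in> Id m"
  using Id_add[of x m "-y"] Id_uminus[of y m] by simp
lemma Id_multL[intro]: "x \<in> Zlam \<Longrightarrow> y \<in> Id m \<Longrightarrow> x * y \<in> Id m"
  unfolding ideal_gen_def apply clarify subgoal for u
    using Zlam_mult[of x u] by (rule_tac x="x*u" in exI) (simp add: algebra_simps) done
lemma Id_multR[intro]: "y \<in> Id m \<Longrightarrow> x \<in> Zlam \<Longrightarrow> y * x \<in> Id m"
  using Id_multL[of x y m] by (simp add: mult.commute)

lemma Id_mono: "m dvd n \<Longrightarrow> x \<in> Id n \<Longrightarrow> x \<in> Id m"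
  unfolding ideal_gen_def apply (elim dvdE) apply clarify subgoal for k u
    using Zlam_mult[of "real k" u] by (rule_tac x="real k * u" in exI) (simp add: algebra_simps) done

lemma Id_one: "Id 1 = Zlam" unfolding ideal_gen_def by auto

lemma Id_cancel: "m > 0 \<Longrightarrow> z \<in> Zlam \<Longrightarrow> real m * z \<in> Id (m * n) \<longleftrightarrow> z \<in> Id n"
proof
  assume m: "m > 0" and "real m * z \<in> Id (m*n)"
  then obtain u where "u \<in> Zlam" "real m * z = real (m*n) * u" unfolding ideal_gen_def by blast
  hence "z = real n * u" using m by simp
  thus "z \<in> Id n" using \<open>u \<in> Zlam\<close> Id_scale by simp
next
  assume "z \<in> Id n"
  then obtain u where "u \<in> Zlam" "z = real n * u" unfolding ideal_gen_def by blast
  thus "real m * z \<in> Id (m*n)" using Id_scale[of u "m*n"] by (simp add: algebra_simps)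
qed



lemma two_ne: "(1::2) \<noteq> 2" by simp

lemma mat2_nth[simp]:
  "mat2 a b c d $ 1 $ 1 = a" "mat2 a b c d $ 1 $ 2 = b"
  "mat2 a b c d $ 2 $ 1 = c" "mat2 a b c d $ 2 $ 2 = d"
  unfolding mat2_def by simp_all

lemma mat_eq2: "(A::real^2^2) = B \<longleftrightarrow> A$1$1 = B$1$1 \<and> A$1$2 = B$1$2 \<and> A$2$1 = B$2$1 \<and> A$2$2 = B$2$2"
  by (auto simp: vec_eq_iff forall_2)

lemma mmul_nth[simp]: "((A::real^2^2) ** B) $ i $ j = A$i$1 * B$1$j + A$i$2 * B$2$j"
  by (simp add: matrix_matrix_mult_def sum_2)

lemma mat1_nth[simp]: "(mat 1 :: real^2^2) $ 1 $ 1 = 1" "(mat 1 :: real^2^2) $ 1 $ 2 = 0"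
  "(mat 1 :: real^2^2) $ 2 $ 1 = 0" "(mat 1 :: real^2^2) $ 2 $ 2 = 1"
  by (simp_all add: mat_def)

lemma mat2_eq_iff[simp]: "mat2 a b c d = mat2 a' b' c' d' \<longleftrightarrow> a = a' \<and> b = b' \<and> c = c' \<and> d = d'"
  by (simp add: mat_eq2)

lemma mat2_eta: "(A::real^2^2) = mat2 (A$1$1) (A$1$2) (A$2$1) (A$2$2)"
  by (simp add: mat_eq2)

lemma mat2_mult[simp]: "mat2 a b c d ** mat2 e f g h = mat2 (a*e+b*g) (a*f+b*h) (c*e+d*g) (c*f+d*h)"
  by (simp add: mat_eq2)
lemma mat1_mat2: "(mat 1 :: real^2^2) = mat2 1 0 0 1" by (simp add: mat_eq2)
lemma mat2_add[simp]: "mat2 a b c d + mat2 e f g h = mat2 (a+e) (b+f) (c+g) (d+h)"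
  by (simp add: mat_eq2)
lemma mat2_diff[simp]: "mat2 a b c d - mat2 e f g h = mat2 (a-e) (b-f) (c-g) (d-h)"
  by (simp add: mat_eq2)
lemma mat2_scale[simp]: "r *\<^sub>R mat2 a b c d = mat2 (r*a) (r*b) (r*c) (r*d)"
  by (simp add: mat_eq2)

definition MO :: "real^2^2 \<Rightarrow> bool" where
  "MO A \<longleftrightarrow> A$1$1 \<in> Zlam \<and> A$1$2 \<in> Zlam \<and> A$2$1 \<in> Zlam \<and> A$2$2 \<in> Zlam"

lemma MO_mat2[simp]: "MO (mat2 a b c d) \<longleftrightarrow> a \<in> Zlam \<and> b \<in> Zlam \<and> c \<in> Zlam \<and> d \<in> Zlam"
  by (simp add: MO_def)

lemma MO_mult: "MO A \<Longrightarrow> MO B \<Longrightarrow> MO (A ** B)"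
  by (auto simp: MO_def)
lemma MO_add: "MO A \<Longrightarrow> MO B \<Longrightarrow> MO (A + B)"
  by (auto simp: MO_def)
lemma MO_diff: "MO A \<Longrightarrow> MO B \<Longrightarrow> MO (A - B)"
  by (auto simp: MO_def)
lemma MO_scale: "MO A \<Longrightarrow> MO (real n *\<^sub>R A)"
  by (auto simp: MO_def)
lemma MO_1: "MO (mat 1)" by (simp add: MO_def)

lemma mat_cong_iff: "mat_cong (real m) A B \<longleftrightarrow> A$1$1 - B$1$1 \<in> Id m \<and> A$1$2 - B$1$2 \<in> Id m
   \<and> A$2$1 - B$2$1 \<in> Id m \<and> A$2$2 - B$2$2 \<in> Id m"
  unfolding mat_cong_def by (simp add: forall_2)

lemma mc_refl: "mat_cong (real m) A A" by (simp add: mat_cong_iff)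
lemma Id_sym: "x - y \<in> Id m \<Longrightarrow> y - x \<in> Id m"
  using Id_uminus[of "x - y" m] by simp
lemma Id_trans: "x - y \<in> Id m \<Longrightarrow> y - z \<in> Id m \<Longrightarrow> x - z \<in> Id m"
  using Id_add[of "x - y" m "y - z"] by simp
lemma mc_sym: "mat_cong (real m) A B \<Longrightarrow> mat_cong (real m) B A"
  unfolding mat_cong_iff by (blast intro: Id_sym)
lemma mc_trans: "mat_cong (real m) A B \<Longrightarrow> mat_cong (real m) B C \<Longrightarrow> mat_cong (real m) A C"
  unfolding mat_cong_iff by (blast intro: Id_trans)
lemma mc_mono: "k dvd m \<Longrightarrow> mat_cong (real m) A B \<Longrightarrow> mat_cong (real k) A B"
  unfolding mat_cong_iff using Id_mono by blast
lemma mc_mulR: assumes "MO C" "mat_cong (real m) A B" shows "mat_cong (real m) (A ** C) (B ** C)"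
proof -
  have e: "(A ** C)$i$j - (B ** C)$i$j = (A$i$1 - B$i$1) * C$1$j + (A$i$2 - B$i$2) * C$2$j" for i j
    by (simp add: algebra_simps)
  show ?thesis using assms unfolding mat_cong_iff e MO_def by (intro conjI Id_add Id_multR; simp)
qed
lemma mc_mulL: assumes "MO C" "mat_cong (real m) A B" shows "mat_cong (real m) (C ** A) (C ** B)"
proof -
  have e: "(C ** A)$i$j - (C ** B)$i$j = C$i$1 * (A$1$j - B$1$j) + C$i$2 * (A$2$j - B$2$j)" for i j
    by (simp add: algebra_simps)
  show ?thesis using assms unfolding mat_cong_iff e MO_def by (intro conjI Id_add Id_multL; simp)
qed
lemma mc_add: "mat_cong (real m) A B \<Longrightarrow> mat_cong (real m) (A + C) (B + C)"
  unfolding mat_cong_iff by simp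
lemma mc_scale0: "MO X \<Longrightarrow> mat_cong (real m) (real m *\<^sub>R X + C) C"
  unfolding mat_cong_iff MO_def by (simp add: Id_scale)

definition det2 :: "real^2^2 \<Rightarrow> real" where "det2 A = A$1$1 * A$2$2 - A$1$2 * A$2$1"
definition minv :: "real^2^2 \<Rightarrow> real^2^2" where "minv A = mat2 (A$2$2) (- A$1$2) (- A$2$1) (A$1$1)"

lemma det2_mult: "det2 (A ** B) = det2 A * det2 B"
  by (simp add: det2_def algebra_simps)
lemma minv_mult: "minv (A ** B) = minv B ** minv A"
  by (simp add: minv_def mat_eq2 algebra_simps)
lemma minv_right: "det2 A = 1 \<Longrightarrow> A ** minv A = mat 1"
  by (simp add: minv_def mat_eq2 det2_def algebra_simps)
lemma minv_left: "det2 A = 1 \<Longrightarrow> minv A ** A = mat 1"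
  by (simp add: minv_def mat_eq2 det2_def algebra_simps)
lemma MO_minv: "MO A \<Longrightarrow> MO (minv A)"
  by (auto simp: minv_def MO_def)
lemma det2_minv: "det2 (minv A) = det2 A" by (simp add: minv_def det2_def algebra_simps)
lemma minv_minv: "minv (minv A) = A" by (simp add: minv_def mat_eq2)
lemma minv_1: "minv (mat 1) = mat 1" by (simp add: minv_def mat_eq2)

lemma matrix_inv_eq: assumes "(A::real^2^2) ** B = mat 1" "B ** A = mat 1" shows "matrix_inv A = B"
proof -
  have "\<exists>A'. A ** A' = mat 1 \<and> A' ** A = mat 1" using assms by blast
  hence h: "A ** matrix_inv A = mat 1 \<and> matrix_inv A ** A = mat 1"
    unfolding matrix_inv_def by (rule someI_ex)
  have "matrix_inv A = matrix_inv A ** (A ** B)" using assms by simp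
  also have "\<dots> = B" using h by (simp add: matrix_mul_assoc)
  finally show ?thesis .
qed

lemma Sinv: "matrix_inv Smat = mat2 0 (-1) 1 0"
  by (rule matrix_inv_eq) (simp_all add: Smat_def mat1_mat2)
lemma Tinv: "matrix_inv Tmat = mat2 1 (-lam) 0 1"
  by (rule matrix_inv_eq) (simp_all add: Tmat_def mat1_mat2)

lemma gens_basic: "MO Smat" "det2 Smat = 1" "MO Tmat" "det2 Tmat = 1"
  "MO (matrix_inv Smat)" "det2 (matrix_inv Smat) = 1" "MO (matrix_inv Tmat)" "det2 (matrix_inv Tmat) = 1"
  by (simp_all add: Sinv Tinv, simp_all add: Smat_def Tmat_def det2_def Zlam_uminus)

lemma H5_basic: "A \<in> H5 \<Longrightarrow> MO A \<and> det2 A = 1"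
proof (induction rule: H5.induct)
  case H5_one thus ?case by (simp add: MO_1 det2_def)
next
  case (H5_S A) thus ?case by (simp add: MO_mult det2_mult gens_basic)
next
  case (H5_Sinv A) thus ?case by (simp add: MO_mult det2_mult gens_basic)
next
  case (H5_T A) thus ?case by (simp add: MO_mult det2_mult gens_basic)
next
  case (H5_Tinv A) thus ?case by (simp add: MO_mult det2_mult gens_basic)
qed

lemma H5_MO: "A \<in> H5 \<Longrightarrow> MO A" using H5_basic by blast
lemma H5_det: "A \<in> H5 \<Longrightarrow> det2 A = 1" using H5_basic by blast

lemma H5_mult: "B \<in> H5 \<Longrightarrow> A \<in> H5 \<Longrightarrow> A ** B \<in> H5"
proof (induction rule: H5.induct)
  case H5_one thus ?case by simp
next
  case (H5_S B) thus ?case using H5.H5_S[of "A ** B"] by (simp add: matrix_mul_assoc)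
next
  case (H5_Sinv B) thus ?case using H5.H5_Sinv[of "A ** B"] by (simp add: matrix_mul_assoc)
next
  case (H5_T B) thus ?case using H5.H5_T[of "A ** B"] by (simp add: matrix_mul_assoc)
next
  case (H5_Tinv B) thus ?case using H5.H5_Tinv[of "A ** B"] by (simp add: matrix_mul_assoc)
qed

lemma H5_S': "Smat \<in> H5" using H5_S[OF H5_one] by simp
lemma H5_T': "Tmat \<in> H5" using H5_T[OF H5_one] by simp
lemma H5_Si': "matrix_inv Smat \<in> H5" using H5_Sinv[OF H5_one] by simp
lemma H5_Ti': "matrix_inv Tmat \<in> H5" using H5_Tinv[OF H5_one] by simp

lemma H5_minv: "A \<in> H5 \<Longrightarrow> minv A \<in> H5"
proof (induction rule: H5.induct)
  case H5_one thus ?case by (simp add: minv_1 H5.H5_one)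
next
  case (H5_S A)
  have "minv Smat = matrix_inv Smat" unfolding Sinv by (simp add: Smat_def minv_def)
  thus ?case using H5_S by (simp add: minv_mult H5_mult H5_Si')
next
  case (H5_Sinv A)
  have "minv (matrix_inv Smat) = Smat" unfolding Sinv by (simp add: Smat_def minv_def)
  thus ?case using H5_Sinv by (simp add: minv_mult H5_mult H5_S')
next
  case (H5_T A)
  have "minv Tmat = matrix_inv Tmat" unfolding Tinv by (simp add: Tmat_def minv_def)
  thus ?case using H5_T by (simp add: minv_mult H5_mult H5_Ti')
next
  case (H5_Tinv A)
  have "minv (matrix_inv Tmat) = Tmat" unfolding Tinv by (simp add: Tmat_def minv_def)
  thus ?case using H5_Tinv by (simp add: minv_mult H5_mult H5_T')
qed



abbreviation Hc :: "nat \<Rightarrow> (real^2^2) set" where "Hc q \<equiv> Hcong (real q)"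

lemma Hc_iff: "A \<in> Hc q \<longleftrightarrow> A \<in> H5 \<and> mat_cong (real q) A (mat 1)"
  unfolding Hcong_def mat_cong_iff by auto

lemma Hc_H5: "A \<in> Hc q \<Longrightarrow> A \<in> H5" by (simp add: Hc_iff)
lemma Hc_one: "mat 1 \<in> Hc q" by (simp add: Hc_iff mc_refl H5.H5_one)
lemma Hc_mult: assumes "A \<in> Hc q" "B \<in> Hc q" shows "A ** B \<in> Hc q"
proof -
  have "mat_cong (real q) (A ** B) (mat 1 ** B)"
    using assms by (intro mc_mulR) (auto simp: Hc_iff H5_MO)
  hence "mat_cong (real q) (A ** B) (mat 1)" using assms by (auto simp: Hc_iff intro: mc_trans)
  thus ?thesis using assms by (simp add: Hc_iff H5_mult)
qed
lemma Hc_minv: assumes "A \<in> Hc q" shows "minv A \<in> Hc q"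
proof -
  have A: "A \<in> H5" "MO A" "det2 A = 1" using assms by (auto simp: Hc_iff H5_MO H5_det)
  have "mat_cong (real q) (minv A ** mat 1) (minv A ** A)"
    using assms A by (intro mc_mulL) (auto simp: Hc_iff MO_minv intro: mc_sym)
  hence "mat_cong (real q) (minv A) (mat 1)" using minv_left[OF A(3)] by simp
  thus ?thesis using A by (simp add: Hc_iff H5_minv)
qed

definition subgrp :: "(real^2^2) set \<Rightarrow> bool" where
  "subgrp K \<longleftrightarrow> K \<subseteq> H5 \<and> mat 1 \<in> K \<and> (\<forall>A\<in>K. \<forall>B\<in>K. A ** B \<in> K) \<and> (\<forall>A\<in>K. minv A \<in> K)"

lemma subgrp_Hc: "subgrp (Hc q)"
  unfolding subgrp_def using Hc_H5 Hc_one Hc_mult Hc_minv by blast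

abbreviation coset :: "(real^2^2) set \<Rightarrow> real^2^2 \<Rightarrow> (real^2^2) set" where
  "coset K g \<equiv> (\<lambda>k. k ** g) ` K"

lemma coset_eq: assumes K: "subgrp K" and g: "g \<in> H5" and h: "h \<in> H5"
  shows "coset K g = coset K h \<longleftrightarrow> g ** minv h \<in> K"
proof
  have dh: "det2 h = 1" "det2 g = 1" using g h H5_det by auto
  assume e: "coset K g = coset K h"
  have "g \<in> coset K g" using K unfolding subgrp_def by (metis image_eqI matrix_mul_lid)
  then obtain k where k: "k \<in> K" "g = k ** h" using e by auto
  hence "g ** minv h = k" using minv_right[OF dh(1)] by (simp add: matrix_mul_assoc[symmetric])
  thus "g ** minv h \<in> K" using k by simp
next
  have dh: "det2 h = 1" "det2 g = 1" using g h H5_det by auto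
  assume c: "g ** minv h \<in> K"
  define c where "c = g ** minv h"
  have gc: "g = c ** h" unfolding c_def using minv_left[OF dh(1)] by (simp add: matrix_mul_assoc[symmetric])
  have cK: "c \<in> K" "minv c \<in> K" using c K unfolding c_def subgrp_def by auto
  have dc: "det2 c = 1" using cK K unfolding subgrp_def using H5_det by auto
  have hc: "h = minv c ** g" unfolding gc using minv_left[OF dc] by (simp add: matrix_mul_assoc)
  show "coset K g = coset K h"
  proof
    show "coset K g \<subseteq> coset K h"
    proof
      fix x assume "x \<in> coset K g"
      then obtain k where "k \<in> K" "x = k ** g" by auto
      hence "x = (k ** c) ** h" "k ** c \<in> K" using gc cK K unfolding subgrp_def by (auto simp: matrix_mul_assoc)
      thus "x \<in> coset K h" by blast
    qed
  next
    show "coset K h \<subseteq> coset K g"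
    proof
      fix x assume "x \<in> coset K h"
      then obtain k where "k \<in> K" "x = k ** h" by auto
      hence "x = (k ** minv c) ** g" "k ** minv c \<in> K" using hc cK K unfolding subgrp_def by (auto simp: matrix_mul_assoc)
      thus "x \<in> coset K g" by blast
    qed
  qed
qed

lemma same_kernel_card:
  assumes "\<And>x y. x \<in> G \<Longrightarrow> y \<in> G \<Longrightarrow> F x = F y \<longleftrightarrow> f x = f y"
  shows "card (F ` G) = card (f ` G)"
proof -
  define t where "t = (\<lambda>y. F (inv_into G f y))"
  have inv: "x \<in> G \<Longrightarrow> inv_into G f (f x) \<in> G \<and> f (inv_into G f (f x)) = f x" for x
    by (simp add: inv_into_into f_inv_into_f)
  have "t ` (f ` G) = F ` G"
  proof -
    have "t (f x) = F x" if "x \<in> G" for x using inv[OF that] assms that unfolding t_def by blast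
    thus ?thesis by (auto simp: image_iff)
  qed
  moreover have "inj_on t (f ` G)"
  proof (rule inj_onI)
    fix a b assume "a \<in> f ` G" "b \<in> f ` G" "t a = t b"
    then obtain x y where xy: "x \<in> G" "y \<in> G" "a = f x" "b = f y" "t (f x) = t (f y)" by auto
    hence "F (inv_into G f (f x)) = F (inv_into G f (f y))" unfolding t_def by simp
    hence "f (inv_into G f (f x)) = f (inv_into G f (f y))" using assms inv xy by blast
    thus "a = b" using inv xy by simp
  qed
  ultimately show ?thesis using card_image by metis
qed

lemma index_card:
  assumes K: "subgrp K" and G: "G \<subseteq> H5"
    and ker: "\<And>g h. g \<in> G \<Longrightarrow> h \<in> G \<Longrightarrow> f g = f h \<longleftrightarrow> g ** minv h \<in> K"
  shows "grp_index G K = card (f ` G)"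
proof -
  have "{coset K g | g. g \<in> G} = (coset K) ` G" by auto
  hence "grp_index G K = card ((coset K) ` G)" unfolding grp_index_def by simp
  also have "\<dots> = card (f ` G)"
    by (rule same_kernel_card) (use coset_eq[OF K] G ker in blast)
  finally show ?thesis .
qed

definition pr :: "nat \<Rightarrow> real \<Rightarrow> int \<times> int" where "pr m x = (c0 x mod int m, c1 x mod int m)"
definition rho :: "nat \<Rightarrow> real^2^2 \<Rightarrow> (int \<times> int) \<times> (int \<times> int) \<times> (int \<times> int) \<times> (int \<times> int)" where
  "rho m A = (pr m (A$1$1), pr m (A$1$2), pr m (A$2$1), pr m (A$2$2))"

lemma pr_eq: assumes "m > 0" "x \<in> Zlam" "y \<in> Zlam" shows "pr m x = pr m y \<longleftrightarrow> x - y \<in> Id m"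
proof -
  have "x - y \<in> Id m \<longleftrightarrow> int m dvd c0 x - c0 y \<and> int m dvd c1 x - c1 y"
    using Id_iff[OF assms(1), of "x - y"] c_diff[OF assms(2,3)] assms by auto
  thus ?thesis unfolding pr_def by (simp add: mod_eq_dvd_iff)
qed

lemma rho_eq: "m > 0 \<Longrightarrow> MO A \<Longrightarrow> MO B \<Longrightarrow> rho m A = rho m B \<longleftrightarrow> mat_cong (real m) A B"
  unfolding rho_def mat_cong_iff MO_def by (simp add: pr_eq)

lemma pr_range: "m > 0 \<Longrightarrow> pr m x \<in> {0..<int m} \<times> {0..<int m}"
  unfolding pr_def by simp

lemma rho_finite: assumes "m > 0" shows "finite (rho m ` S)"
proof -
  let ?P = "{0..<int m} \<times> {0..<int m}"
  have "rho m ` S \<subseteq> ?P \<times> ?P \<times> ?P \<times> ?P" using pr_range[OF assms] unfolding rho_def by blast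
  thus ?thesis by (rule finite_subset) simp
qed

lemma mc_H5_iff: assumes "A \<in> H5" "B \<in> H5"
  shows "mat_cong (real m) A B \<longleftrightarrow> A ** minv B \<in> Hc m"
proof -
  have B: "MO B" "MO (minv B)" "det2 B = 1" using assms H5_MO H5_det MO_minv by auto
  have AB: "A ** minv B \<in> H5" using assms H5_mult H5_minv by blast
  show ?thesis
  proof
    assume "mat_cong (real m) A B"
    hence "mat_cong (real m) (A ** minv B) (B ** minv B)" using B by (intro mc_mulR)
    thus "A ** minv B \<in> Hc m" using AB minv_right[OF B(3)] by (simp add: Hc_iff)
  next
    assume "A ** minv B \<in> Hc m"
    hence "mat_cong (real m) (A ** minv B ** B) (mat 1 ** B)" using B by (intro mc_mulR) (simp_all add: Hc_iff)
    thus "mat_cong (real m) A B" using minv_left[OF B(3)] by (simp add: matrix_mul_assoc[symmetric])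
  qed
qed

lemma index_H5: "m > 0 \<Longrightarrow> grp_index H5 (Hc m) = card (rho m ` H5)"
  by (rule index_card) (auto simp: subgrp_Hc rho_eq H5_MO mc_H5_iff)



definition Xq :: "nat \<Rightarrow> real^2^2 \<Rightarrow> real^2^2" where "Xq q A = (1 / real q) *\<^sub>R (A - mat 1)"

lemma Xq_unique: "q > 0 \<Longrightarrow> A = mat 1 + real q *\<^sub>R Y \<Longrightarrow> Xq q A = Y"
  unfolding Xq_def by (simp add: mat_eq2)

lemma Id_div: "q > 0 \<Longrightarrow> x \<in> Id q \<Longrightarrow> x / real q \<in> Zlam"
  unfolding ideal_gen_def by auto

lemma Xq_Hc: assumes "q > 0" "A \<in> Hc q" shows "MO (Xq q A)" "A = mat 1 + real q *\<^sub>R Xq q A"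
proof -
  have "A$1$1 - 1 \<in> Id q" "A$1$2 \<in> Id q" "A$2$1 \<in> Id q" "A$2$2 - 1 \<in> Id q"
    using assms(2) unfolding Hcong_def by auto
  thus "MO (Xq q A)" unfolding Xq_def MO_def using Id_div[OF assms(1)] by simp
  show "A = mat 1 + real q *\<^sub>R Xq q A" unfolding Xq_def using assms(1) by (simp add: mat_eq2)
qed

lemma mc_cancel: assumes "q > 0" "MO X" "MO Y"
  shows "mat_cong (real (q*m)) (mat 1 + real q *\<^sub>R X) (mat 1 + real q *\<^sub>R Y) \<longleftrightarrow> mat_cong (real m) X Y"
proof -
  have e: "(mat 1 + real q *\<^sub>R X)$i$j - (mat 1 + real q *\<^sub>R Y)$i$j = real q * (X$i$j - Y$i$j)" for i j
    by (simp add: algebra_simps)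
  have c: "z \<in> Zlam \<Longrightarrow> real q * z \<in> Id (q*m) \<longleftrightarrow> z \<in> Id m" for z using Id_cancel[OF assms(1)] by blast
  show ?thesis unfolding mat_cong_iff e using assms unfolding MO_def by (simp only: c Zlam_diff)
qed

lemma trace_aux: fixes q a b c d :: real
  assumes h: "(1 + q*a)*(1+q*d) - (q*b)*(q*c) = 1" and q: "q \<noteq> 0"
  shows "a + d = q * (b*c - a*d)"
proof -
  have "q * (a + d - q*(b*c - a*d)) = (1 + q*a)*(1+q*d) - (q*b)*(q*c) - 1" by (simp add: algebra_simps)
  also have "\<dots> = 0" using h by simp
  finally have "a + d - q*(b*c - a*d) = 0" using q by simp
  thus ?thesis by simp
qed

lemma trace_lemma: assumes "A \<in> H5" "MO X" "A = mat 1 + real q *\<^sub>R X" "p dvd q" "q > 0"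
  shows "X$1$1 + X$2$2 \<in> Id p"
proof -
  have "det2 A = 1" using assms H5_det by simp
  hence "(1 + real q * X$1$1) * (1 + real q * X$2$2) - (real q * X$1$2) * (real q * X$2$1) = 1"
    unfolding det2_def assms(3) by simp
  hence e: "X$1$1 + X$2$2 = real q * (X$1$2 * X$2$1 - X$1$1 * X$2$2)"
    using assms(5) by (intro trace_aux) auto
  have "X$1$2 * X$2$1 - X$1$1 * X$2$2 \<in> Zlam" using assms(2) unfolding MO_def
    by (intro Zlam_diff Zlam_mult) auto
  hence "X$1$1 + X$2$2 \<in> Id q" unfolding e by (rule Id_scale)
  thus ?thesis using Id_mono assms(4) by blast
qed

definition padd :: "nat \<Rightarrow> int \<times> int \<Rightarrow> int \<times> int \<Rightarrow> int \<times> int" where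
  "padd p u v = ((fst u + fst v) mod int p, (snd u + snd v) mod int p)"

definition vec6 :: "nat \<Rightarrow> real^2^2 \<Rightarrow> (int \<times> int) \<times> (int \<times> int) \<times> (int \<times> int)" where
  "vec6 p X = (pr p (X$1$1), pr p (X$1$2), pr p (X$2$1))"

definition vadd :: "nat \<Rightarrow> _ \<Rightarrow> _ \<Rightarrow> (int \<times> int) \<times> (int \<times> int) \<times> (int \<times> int)" where
  "vadd p u v = (padd p (fst u) (fst v), padd p (fst (snd u)) (fst (snd v)), padd p (snd (snd u)) (snd (snd v)))"

definition phi :: "nat \<Rightarrow> nat \<Rightarrow> real^2^2 \<Rightarrow> (int \<times> int) \<times> (int \<times> int) \<times> (int \<times> int)" where
  "phi p q A = vec6 p (Xq q A)"

lemma pr_add: "x \<in> Zlam \<Longrightarrow> y \<in> Zlam \<Longrightarrow> pr p (x + y) = padd p (pr p x) (pr p y)"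
  unfolding pr_def padd_def using c_add by (simp add: mod_add_eq)

lemma vec6_cong: "p > 0 \<Longrightarrow> MO X \<Longrightarrow> MO Y \<Longrightarrow> mat_cong (real p) X Y \<Longrightarrow> vec6 p X = vec6 p Y"
  unfolding vec6_def MO_def by (simp add: pr_eq mat_cong_iff)

lemma vec6_add: "MO X \<Longrightarrow> MO Y \<Longrightarrow> vec6 p (X + Y) = vadd p (vec6 p X) (vec6 p Y)"
  unfolding vec6_def vadd_def MO_def by (simp add: pr_add)

lemma phi_ker: assumes p: "p > 0" "p dvd q" and q: "q > 0" and A: "A \<in> Hc q" and B: "B \<in> Hc q"
  shows "phi p q A = phi p q B \<longleftrightarrow> A ** minv B \<in> Hc (p * q)"
proof -
  note XA = Xq_Hc[OF q A] and XB = Xq_Hc[OF q B]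
  have "A ** minv B \<in> Hc (p * q) \<longleftrightarrow> mat_cong (real (q * p)) A B"
    using mc_H5_iff[of A B "p*q"] A B Hc_H5 by (simp add: mult.commute)
  also have "\<dots> \<longleftrightarrow> mat_cong (real p) (Xq q A) (Xq q B)"
    using mc_cancel[OF q XA(1) XB(1), of p] XA(2) XB(2) by simp
  also have "\<dots> \<longleftrightarrow> phi p q A = phi p q B"
  proof
    assume "mat_cong (real p) (Xq q A) (Xq q B)"
    thus "phi p q A = phi p q B" unfolding phi_def using vec6_cong[OF p(1) XA(1) XB(1)] by simp
  next
    assume "phi p q A = phi p q B"
    hence h: "(Xq q A)$1$1 - (Xq q B)$1$1 \<in> Id p" "(Xq q A)$1$2 - (Xq q B)$1$2 \<in> Id p"
      "(Xq q A)$2$1 - (Xq q B)$2$1 \<in> Id p"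
      unfolding phi_def vec6_def using XA(1) XB(1) pr_eq[OF p(1)] unfolding MO_def by auto
    have t: "(Xq q A)$1$1 + (Xq q A)$2$2 \<in> Id p" "(Xq q B)$1$1 + (Xq q B)$2$2 \<in> Id p"
      using trace_lemma[OF Hc_H5[OF A] XA(1) XA(2) p(2) q] trace_lemma[OF Hc_H5[OF B] XB(1) XB(2) p(2) q] by auto
    have "(Xq q A)$2$2 - (Xq q B)$2$2 = ((Xq q A)$1$1 + (Xq q A)$2$2) - ((Xq q B)$1$1 + (Xq q B)$2$2)
       - ((Xq q A)$1$1 - (Xq q B)$1$1)" by simp
    hence "(Xq q A)$2$2 - (Xq q B)$2$2 \<in> Id p" using h t by (metis Id_diff)
    thus "mat_cong (real p) (Xq q A) (Xq q B)" using h unfolding mat_cong_iff by simp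
  qed
  finally show ?thesis by simp
qed

lemma Xq_mult: assumes "q > 0" "MO X" "MO Y"
  shows "Xq q ((mat 1 + real q *\<^sub>R X) ** (mat 1 + real q *\<^sub>R Y)) = X + Y + real q *\<^sub>R (X ** Y)"
  by (rule Xq_unique[OF assms(1)]) (simp add: mat_eq2 algebra_simps)

lemma phi_mult: assumes p: "p > 0" "p dvd q" and q: "q > 0" and A: "A \<in> Hc q" and B: "B \<in> Hc q"
  shows "phi p q (A ** B) = vadd p (phi p q A) (phi p q B)"
proof -
  note XA = Xq_Hc[OF q A] and XB = Xq_Hc[OF q B]
  have "Xq q (A ** B) = Xq q A + Xq q B + real q *\<^sub>R (Xq q A ** Xq q B)"
    using Xq_mult[OF q XA(1) XB(1)] XA(2) XB(2) by simp
  moreover have "mat_cong (real p) (real q *\<^sub>R (Xq q A ** Xq q B) + (Xq q A + Xq q B)) (Xq q A + Xq q B)"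
  proof -
    obtain r where r: "q = p * r" using p(2) by (auto elim: dvdE)
    have "real q *\<^sub>R (Xq q A ** Xq q B) = real p *\<^sub>R (real r *\<^sub>R (Xq q A ** Xq q B))" using r by simp
    thus ?thesis using mc_scale0[of "real r *\<^sub>R (Xq q A ** Xq q B)" p] MO_scale MO_mult XA(1) XB(1) by metis
  qed
  ultimately have "phi p q (A ** B) = vec6 p (Xq q A + Xq q B)"
    unfolding phi_def using vec6_cong[OF p(1)] MO_add MO_scale MO_mult XA(1) XB(1)
    by (metis add.commute)
  thus ?thesis unfolding phi_def using vec6_add XA(1) XB(1) by simp
qed

lemma phi_range: "p > 0 \<Longrightarrow> phi p q A \<in> ({0..<int p} \<times> {0..<int p}) \<times> ({0..<int p} \<times> {0..<int p}) \<times> ({0..<int p} \<times> {0..<int p})"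
  unfolding phi_def vec6_def using pr_range by blast



lemma ideal_0: "0 \<in> ideal_gen r" unfolding ideal_gen_def using Zlam_0 by force

fun mpow :: "real^2^2 \<Rightarrow> nat \<Rightarrow> real^2^2" where
  "mpow A 0 = mat 1" | "mpow A (Suc n) = mpow A n ** A"

lemma mpow_H5: "A \<in> H5 \<Longrightarrow> mpow A n \<in> H5"
  by (induction n) (auto simp: H5.H5_one H5_mult)

lemma choose2_Suc: "Suc j choose 2 = (j choose 2) + j"
  by (simp add: numeral_2_eq_2)

lemma pow_id: "(mat 1 + (a::real) *\<^sub>R (X::real^2^2) + b *\<^sub>R (X ** X)) ** (mat 1 + q *\<^sub>R X)
   = (b * q) *\<^sub>R (X ** X ** X) + (mat 1 + (a + q) *\<^sub>R X + (b + a * q) *\<^sub>R (X ** X))"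
  unfolding mat_eq2 by (simp add: algebra_simps)

lemma pow_expand: assumes X: "MO X" and A: "A = mat 1 + real q *\<^sub>R X"
  shows "mat_cong (real (q^3)) (mpow A j)
           (mat 1 + (real j * real q) *\<^sub>R X + (real (j choose 2) * real q ^ 2) *\<^sub>R (X ** X))"
proof (induction j)
  case 0 thus ?case by (simp add: numeral_2_eq_2 mat_cong_def ideal_0)
next
  case (Suc j)
  have MA: "MO A" unfolding A using X by (intro MO_add MO_1 MO_scale)
  have "mat_cong (real (q^3)) (mpow A (Suc j))
      ((mat 1 + (real j * real q) *\<^sub>R X + (real (j choose 2) * real q ^ 2) *\<^sub>R (X ** X)) ** A)"
    using mc_mulR[OF MA Suc.IH] by simp
  also have "(mat 1 + (real j * real q) *\<^sub>R X + (real (j choose 2) * real q ^ 2) *\<^sub>R (X ** X)) ** A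
     = real (q^3) *\<^sub>R (real (j choose 2) *\<^sub>R (X ** X ** X)) +
       (mat 1 + (real (Suc j) * real q) *\<^sub>R X + (real (Suc j choose 2) * real q ^ 2) *\<^sub>R (X ** X))"
    unfolding A pow_id choose2_Suc by (simp add: algebra_simps power3_eq_cube power2_eq_square)
  finally have c: "mat_cong (real (q^3)) (mpow A (Suc j))
     (real (q^3) *\<^sub>R (real (j choose 2) *\<^sub>R (X ** X ** X)) +
       (mat 1 + (real (Suc j) * real q) *\<^sub>R X + (real (Suc j choose 2) * real q ^ 2) *\<^sub>R (X ** X)))" .
  have M3: "MO (real (j choose 2) *\<^sub>R (X ** X ** X))" using X by (intro MO_scale MO_mult)
  show ?case by (rule mc_trans[OF c mc_scale0[OF M3]])
qed

lemma pow_step: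
  assumes p: "prime p" "odd p" "p dvd q" and q: "q > 0" and A: "A \<in> Hc q"
    and E: "MO E" "mat_cong (real p) (Xq q A) E"
  shows "mpow A p \<in> Hc (p*q) \<and> mat_cong (real p) (Xq (p*q) (mpow A p)) E"
proof -
  note XA = Xq_Hc[OF q A]
  define X where "X = Xq q A"
  have X: "MO X" "A = mat 1 + real q *\<^sub>R X" using XA unfolding X_def by auto
  have p0: "p > 0" using p prime_gt_0_nat by blast
  obtain r where r: "q = p * r" using p(3) by (auto elim: dvdE)
  have "mat_cong (real (q^3)) (mpow A p)
           (mat 1 + (real p * real q) *\<^sub>R X + (real (p choose 2) * real q ^ 2) *\<^sub>R (X ** X))"
    by (rule pow_expand[OF X])
  moreover have "(p*q*p) dvd q^3" using r by (simp add: power3_eq_cube)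
  ultimately have c1: "mat_cong (real (p*q*p)) (mpow A p)
           (mat 1 + (real p * real q) *\<^sub>R X + (real (p choose 2) * real q ^ 2) *\<^sub>R (X ** X))"
    using mc_mono by blast
  define t where "t = ((p - 1) div 2) * r"
  have ch: "p choose 2 = p * ((p - 1) div 2)"
  proof -
    have "even (p - 1)" using p(2) p0 by simp
    then obtain u where "p - 1 = 2 * u" by (rule evenE)
    hence "p = Suc (2*u)" using p0 by simp
    thus ?thesis by (simp add: choose_two)
  qed
  have "real (p choose 2) * real q ^ 2 = real (p*q*p) * real t"
    unfolding ch t_def r by (simp add: power2_eq_square)
  hence eqm: "mat 1 + (real p * real q) *\<^sub>R X + (real (p choose 2) * real q ^ 2) *\<^sub>R (X ** X)
      = real (p*q*p) *\<^sub>R (real t *\<^sub>R (X ** X)) + (mat 1 + real (p*q) *\<^sub>R X)"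
    by (simp add: algebra_simps)
  have c1': "mat_cong (real (p*q*p)) (mpow A p) (real (p*q*p) *\<^sub>R (real t *\<^sub>R (X ** X)) + (mat 1 + real (p*q) *\<^sub>R X))"
    using c1 unfolding eqm .
  have M2: "MO (real t *\<^sub>R (X ** X))" using X by (intro MO_scale MO_mult)
  have c2: "mat_cong (real (p*q*p)) (mpow A p) (mat 1 + real (p*q) *\<^sub>R X)"
    by (rule mc_trans[OF c1' mc_scale0[OF M2]])
  have "mat_cong (real (p*q)) (mpow A p) (mat 1 + real (p*q) *\<^sub>R X)"
    using mc_mono[OF _ c2, of "p*q"] by simp
  moreover have "mat_cong (real (p*q)) (mat 1 + real (p*q) *\<^sub>R X) (mat 1)"
    using mc_scale0[OF X(1), of "p*q" "mat 1"] by (simp only: add.commute)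
  ultimately have "mat_cong (real (p*q)) (mpow A p) (mat 1)" by (rule mc_trans)
  hence inH: "mpow A p \<in> Hc (p*q)"
    using mpow_H5 Hc_H5[OF A] Hc_iff[of "mpow A p" "p*q"] by blast
  have pq: "p * q > 0" using p0 q by simp
  note XB = Xq_Hc[OF pq inH]
  define Y where "Y = Xq (p*q) (mpow A p)"
  have Y: "MO Y" "mpow A p = mat 1 + real (p*q) *\<^sub>R Y" using XB unfolding Y_def by auto
  have "mat_cong (real (p*q*p)) (mat 1 + real (p*q) *\<^sub>R Y) (mat 1 + real (p*q) *\<^sub>R X)"
    using c2 unfolding Y(2) .
  hence "mat_cong (real p) Y X" using mc_cancel[OF pq Y(1) X(1)] by simp
  hence "mat_cong (real p) (Xq (p*q) (mpow A p)) X" unfolding Y_def .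
  hence "mat_cong (real p) (Xq (p*q) (mpow A p)) E" using E(2) unfolding X_def by (rule mc_trans)
  thus ?thesis using inH by simp
qed

definition E12 :: "real^2^2" where "E12 = mat2 0 1 0 0"

lemma MO_E12: "MO E12" by (simp add: E12_def)

lemma sigma_ex:
  assumes p: "prime p" "odd p"
    and h: "\<exists>\<sigma>\<in>Hcong (real p). mat_cong (real p ^ 2) \<sigma> (mat2 1 (real p) 0 1)"
  shows "k \<ge> 1 \<Longrightarrow> \<exists>s\<in>Hc (p^k). mat_cong (real p) (Xq (p^k) s) E12"
proof (induction k rule: dec_induct)
  case base
  from h obtain s where s: "s \<in> Hc p" "mat_cong (real (p*p)) s (mat2 1 (real p) 0 1)"
    by (auto simp: power2_eq_square)
  have p0: "p > 0" using p prime_gt_0_nat by blast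
  note Xs = Xq_Hc[OF p0 s(1)]
  define Y where "Y = Xq p s"
  have Y: "MO Y" "s = mat 1 + real p *\<^sub>R Y" using Xs unfolding Y_def by auto
  have "mat2 1 (real p) 0 1 = mat 1 + real p *\<^sub>R E12" by (simp add: E12_def mat1_mat2)
  hence "mat_cong (real (p*p)) (mat 1 + real p *\<^sub>R Y) (mat 1 + real p *\<^sub>R E12)"
    using s(2) unfolding Y(2) by simp
  hence "mat_cong (real p) Y E12" using mc_cancel[OF p0 Y(1) MO_E12] by simp
  hence "mat_cong (real p) (Xq p s) E12" unfolding Y_def .
  thus ?case using s(1) by auto
next
  case (step k)
  then obtain s where s: "s \<in> Hc (p^k)" "mat_cong (real p) (Xq (p^k) s) E12" by blast
  have "p dvd p^k" "p^k > 0" using step(1) p prime_gt_0_nat by (auto simp: dvd_power)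
  from pow_step[OF p this(1) this(2) s(1) MO_E12 s(2)]
  show ?case by (simp only: power_Suc) blast
qed

lemma conj_id: "g ** (mat 1 + c *\<^sub>R X) ** minv g = g ** minv g + c *\<^sub>R (g ** X ** minv g)"
  by (simp add: mat_eq2 algebra_simps minv_def)

lemma conj_Hc: assumes q: "q > 0" and g: "g \<in> H5" and s: "s \<in> Hc q"
  shows "g ** s ** minv g \<in> Hc q \<and> Xq q (g ** s ** minv g) = g ** Xq q s ** minv g"
proof -
  note Xs = Xq_Hc[OF q s]
  define Y where "Y = Xq q s"
  have Y: "MO Y" "s = mat 1 + real q *\<^sub>R Y" using Xs unfolding Y_def by auto
  have e: "g ** s ** minv g = mat 1 + real q *\<^sub>R (g ** Xq q s ** minv g)"
    unfolding Y_def[symmetric] unfolding Y(2) conj_id minv_right[OF H5_det[OF g]] ..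
  have M: "MO (g ** Xq q s ** minv g)" using H5_MO[OF g] Xs(1) by (intro MO_minv MO_mult)
  have "mat_cong (real q) (g ** s ** minv g) (mat 1)"
    unfolding e using mc_scale0[OF M, of q "mat 1"] by (simp add: add.commute)
  moreover have "g ** s ** minv g \<in> H5" using g Hc_H5[OF s] by (intro H5_mult H5_minv)
  ultimately show ?thesis using Xq_unique[OF q e] by (simp add: Hc_iff)
qed

lemma conj_E12: "g ** E12 ** minv g = mat2 (-(g$1$1 * g$2$1)) (g$1$1 * g$1$1) (-(g$2$1 * g$2$1)) (g$1$1 * g$2$1)"
  by (simp add: mat_eq2 E12_def minv_def)

lemma phi_conj: assumes p: "p > 0" and q: "q > 0" and g: "g \<in> H5" and s: "s \<in> Hc q"
  and sE: "mat_cong (real p) (Xq q s) E12"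
  shows "g ** s ** minv g \<in> Hc q \<and>
     phi p q (g ** s ** minv g) = (pr p (-(g$1$1 * g$2$1)), pr p (g$1$1 * g$1$1), pr p (-(g$2$1 * g$2$1)))"
proof -
  note c = conj_Hc[OF q g s]
  note Xs = Xq_Hc[OF q s]
  have Mg: "MO g" "MO (minv g)" using H5_MO[OF g] MO_minv by auto
  have "mat_cong (real p) (g ** Xq q s ** minv g) (g ** E12 ** minv g)"
    using sE Mg by (intro mc_mulR mc_mulL) auto
  hence "vec6 p (g ** Xq q s ** minv g) = vec6 p (g ** E12 ** minv g)"
    using vec6_cong[OF p] Mg Xs(1) MO_E12 by (simp add: MO_mult)
  thus ?thesis using c unfolding phi_def conj_E12 vec6_def by simp
qed



type_synonym i6 = "int \<times> int \<times> int \<times> int \<times> int \<times> int"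

fun add6 :: "i6 \<Rightarrow> i6 \<Rightarrow> i6" where
  "add6 (a0,a1,a2,a3,a4,a5) (b0,b1,b2,b3,b4,b5) = (a0+b0,a1+b1,a2+b2,a3+b3,a4+b4,a5+b5)"
fun sm6 :: "int \<Rightarrow> i6 \<Rightarrow> i6" where
  "sm6 c (a0,a1,a2,a3,a4,a5) = (c*a0,c*a1,c*a2,c*a3,c*a4,c*a5)"
fun V :: "nat \<Rightarrow> i6 \<Rightarrow> (int \<times> int) \<times> (int \<times> int) \<times> (int \<times> int)" where
  "V p (a0,a1,a2,a3,a4,a5) = ((a0 mod int p, a1 mod int p), (a2 mod int p, a3 mod int p), (a4 mod int p, a5 mod int p))"

lemma V_add: "vadd p (V p x) (V p y) = V p (add6 x y)"
  by (cases x; cases y) (simp add: vadd_def padd_def mod_add_eq)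

lemma sm6_Suc: "sm6 (int (Suc n)) x = add6 (sm6 (int n) x) x"
  by (cases x) (simp add: algebra_simps)

lemma V_sm_mod: "V p (sm6 c x) = V p (sm6 (c mod int p) x)"
  by (cases x) (simp add: mod_mult_left_eq)

lemma pr_lit: "x = of_int u + of_int v * lam \<Longrightarrow> pr p x = (u mod int p, v mod int p)"
  by (simp add: pr_def)

locale setting =
  fixes p q :: nat and s :: "real^2^2"
  assumes p: "prime p" "odd p" and pq: "p dvd q" and q: "q > 0"
    and s: "s \<in> Hc q" "mat_cong (real p) (Xq q s) E12"
begin

abbreviation "Img \<equiv> phi p q ` Hc q"

lemma p0: "p > 0" using p prime_gt_0_nat by blast

lemma Img_add: "u \<in> Img \<Longrightarrow> v \<in> Img \<Longrightarrow> vadd p u v \<in> Img"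
proof -
  assume "u \<in> Img" "v \<in> Img"
  then obtain A B where AB: "A \<in> Hc q" "B \<in> Hc q" "u = phi p q A" "v = phi p q B" by auto
  hence "vadd p u v = phi p q (A ** B)" using phi_mult[OF p0 pq q] by simp
  thus ?thesis using AB Hc_mult by blast
qed

lemma Img_zero: "V p (0,0,0,0,0,0) \<in> Img"
proof -
  have "Xq q (mat 1) = mat2 0 0 0 0" by (simp add: Xq_def mat_eq2)
  moreover have "pr p 0 = (0, 0)" using pr_lit[of 0 0 0 p] by simp
  ultimately have "phi p q (mat 1) = V p (0,0,0,0,0,0)" by (simp add: phi_def vec6_def)
  thus ?thesis using Hc_one by (metis image_eqI)
qed

lemma Img_V_add: "V p x \<in> Img \<Longrightarrow> V p y \<in> Img \<Longrightarrow> V p (add6 x y) \<in> Img"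
  using Img_add V_add by metis

lemma Img_nat: "V p x \<in> Img \<Longrightarrow> V p (sm6 (int n) x) \<in> Img"
proof (induction n)
  case 0
  have "sm6 0 x = (0,0,0,0,0,0)" by (cases x) simp
  thus ?case using Img_zero by simp
next
  case (Suc n) thus ?case using Img_V_add sm6_Suc by metis
qed

lemma Img_int: assumes "V p x \<in> Img" shows "V p (sm6 c x) \<in> Img"
proof -
  have "c mod int p = int (nat (c mod int p))" using p0 by simp
  hence "V p (sm6 c x) = V p (sm6 (int (nat (c mod int p))) x)" using V_sm_mod by metis
  thus ?thesis by (simp only: Img_nat[OF assms])
qed

lemma gen_in: assumes g: "g \<in> H5"
  and e: "-(g$1$1 * g$2$1) = of_int u0 + of_int u1 * lam" "g$1$1*g$1$1 = of_int u2 + of_int u3 * lam"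
     "-(g$2$1*g$2$1) = of_int u4 + of_int u5 * lam"
  shows "V p (u0,u1,u2,u3,u4,u5) \<in> Img"
proof -
  note c = phi_conj[OF p0 q g s]
  have "phi p q (g ** s ** minv g) = V p (u0,u1,u2,u3,u4,u5)"
    using c by (simp add: pr_lit[OF e(1)] pr_lit[OF e(2)] pr_lit[OF e(3)])
  thus ?thesis using c by (metis image_eqI)
qed

lemma gens:
  "V p (0,0,1,0,0,0) \<in> Img" "V p (0,0,0,0,-1,0) \<in> Img" "V p (0,-1,1,1,-1,0) \<in> Img"
  "V p (0,1,1,1,-1,0) \<in> Img" "V p (0,1,1,0,-1,-1) \<in> Img" "V p (-1,-1,1,1,-1,-1) \<in> Img"
proof -
  show "V p (0,0,1,0,0,0) \<in> Img" by (rule gen_in[OF H5.H5_one]) simp_all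
  show "V p (0,0,0,0,-1,0) \<in> Img" by (rule gen_in[OF H5_S']) (simp_all add: Smat_def)
  show "V p (0,-1,1,1,-1,0) \<in> Img" by (rule gen_in[OF H5_mult[OF H5_S' H5_T']])
     (simp_all add: Smat_def Tmat_def lam_sq)
  show "V p (0,1,1,1,-1,0) \<in> Img" by (rule gen_in[OF H5_mult[OF H5_S' H5_Ti']])
     (simp_all add: Smat_def Tinv lam_sq)
  show "V p (0,1,1,0,-1,-1) \<in> Img" by (rule gen_in[OF H5_mult[OF H5_S' H5_mult[OF H5_T' H5_S']]])
     (simp_all add: Smat_def Tmat_def lam_sq)
  have "Tmat ** Smat ** Tmat ** Smat \<in> H5"
    by (intro H5_mult H5_S' H5_T')
  thus "V p (-1,-1,1,1,-1,-1) \<in> Img" by (rule gen_in)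
     (simp_all add: Smat_def Tmat_def lam_sq algebra_simps)
qed

lemma all_in: "V p (t0,t1,t2,t3,t4,t5) \<in> Img"
proof -
  obtain k where "p = 2*k + 1" using p(2) by (auto elim: oddE)
  define h :: int where "h = int k + 1"
  have hp: "int p = 2*h - 1" unfolding h_def using \<open>p = 2*k+1\<close> by simp
  define N0 where "N0 = -t0 + t2 - t3 + t5"
  define N1 where "N1 = -t0 - t3 - t4 + t5"
  define N2 where "N2 = h*(3*t0 - t1 + t3 - t5)"
  define N3 where "N3 = h*(-t0 + t1 + t3 + t5)"
  define N4 where "N4 = t0 - t5"
  define N5 where "N5 = -t0"
  have mem: "V p (add6 (sm6 N0 (0,0,1,0,0,0)) (add6 (sm6 N1 (0,0,0,0,-1,0)) (add6 (sm6 N2 (0,-1,1,1,-1,0))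
     (add6 (sm6 N3 (0,1,1,1,-1,0)) (add6 (sm6 N4 (0,1,1,0,-1,-1)) (sm6 N5 (-1,-1,1,1,-1,-1))))))) \<in> Img"
    by (intro Img_V_add Img_int gens)
  have eq: "add6 (sm6 N0 (0,0,1,0,0,0)) (add6 (sm6 N1 (0,0,0,0,-1,0)) (add6 (sm6 N2 (0,-1,1,1,-1,0))
     (add6 (sm6 N3 (0,1,1,1,-1,0)) (add6 (sm6 N4 (0,1,1,0,-1,-1)) (sm6 N5 (-1,-1,1,1,-1,-1))))))
    = (t0 + (2*h-1)*0, t1 + (2*h-1)*(-2*t0+t1+t5), t2 + (2*h-1)*(t0+t3), t3 + (2*h-1)*(t0+t3),
       t4 + (2*h-1)*(-(t0+t3)), t5 + (2*h-1)*0)"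
    unfolding N0_def N1_def N2_def N3_def N4_def N5_def by (simp add: algebra_simps)
  have v: "V p (t0 + (2*h-1)*0, t1 + (2*h-1)*(-2*t0+t1+t5), t2 + (2*h-1)*(t0+t3), t3 + (2*h-1)*(t0+t3),
       t4 + (2*h-1)*(-(t0+t3)), t5 + (2*h-1)*0) = V p (t0,t1,t2,t3,t4,t5)"
    unfolding hp[symmetric] by simp
  show ?thesis using mem unfolding eq v .
qed

lemma Img_eq: "Img = ({0..<int p} \<times> {0..<int p}) \<times> ({0..<int p} \<times> {0..<int p}) \<times> ({0..<int p} \<times> {0..<int p})"
  (is "_ = ?R")
proof
  show "Img \<subseteq> ?R" using phi_range[OF p0] by blast
next
  show "?R \<subseteq> Img"
  proof
    fix x assume "x \<in> ?R"
    then obtain t0 t1 t2 t3 t4 t5 where x: "x = ((t0,t1),(t2,t3),(t4,t5))"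
      and r: "0 \<le> t0" "t0 < int p" "0 \<le> t1" "t1 < int p" "0 \<le> t2" "t2 < int p"
         "0 \<le> t3" "t3 < int p" "0 \<le> t4" "t4 < int p" "0 \<le> t5" "t5 < int p" by auto
    have "x = V p (t0,t1,t2,t3,t4,t5)" using r x by simp
    thus "x \<in> Img" using all_in by simp
  qed
qed

lemma card_Img: "card Img = p^6"
proof -
  have "card ({0..<int p} \<times> {0..<int p}) = p^2" by (simp add: card_cartesian_product power2_eq_square)
  thus ?thesis unfolding Img_eq by (simp add: card_cartesian_product power_def numeral_eq_Suc)
qed

end


type_synonym r8 = "(int \<times> int) \<times> (int \<times> int) \<times> (int \<times> int) \<times> (int \<times> int)"

lemma card_Img_q:
  assumes p: "prime p" "odd p"
    and h: "\<exists>\<sigma>\<in>Hcong (real p). mat_cong (real p ^ 2) \<sigma> (mat2 1 (real p) 0 1)"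
    and n: "n \<ge> 1"
  shows "card (phi p (p^n) ` Hc (p^n)) = p^6"
proof -
  obtain s where s: "s \<in> Hc (p^n)" "mat_cong (real p) (Xq (p^n) s) E12" using sigma_ex[OF p h n] by blast
  have "p dvd p^n" "p^n > 0" using n p prime_gt_0_nat by (auto simp: dvd_power)
  then interpret setting p "p^n" s using p s by unfold_locales auto
  show ?thesis by (rule card_Img)
qed

lemma index_step:
  assumes p: "prime p" "odd p"
    and h: "\<exists>\<sigma>\<in>Hcong (real p). mat_cong (real p ^ 2) \<sigma> (mat2 1 (real p) 0 1)"
    and n: "n \<ge> 1"
  shows "grp_index (Hc (p^n)) (Hc (p * p^n)) = p^6"
proof -
  have pm: "p > 0" "p dvd p^n" "p^n > 0" using n p prime_gt_0_nat by (auto simp: dvd_power)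
  have "grp_index (Hc (p^n)) (Hc (p * p^n)) = card (phi p (p^n) ` Hc (p^n))"
    by (rule index_card[OF subgrp_Hc], blast intro: Hc_H5, rule phi_ker[OF pm])
  thus ?thesis using card_Img_q[OF p h n] by simp
qed

lemma rho_step:
  assumes p: "prime p" "odd p"
    and h: "\<exists>\<sigma>\<in>Hcong (real p). mat_cong (real p ^ 2) \<sigma> (mat2 1 (real p) 0 1)"
    and n: "n \<ge> 1"
  shows "card (rho (p * p^n) ` H5) = p^6 * card (rho (p^n) ` H5)"
proof -
  define m where "m = p^n"
  define M where "M = p * m"
  have pm: "p > 0" "p dvd m" "m > 0" using n p prime_gt_0_nat unfolding m_def by (auto simp: dvd_power)
  have M0: "M > 0" "m dvd M" using pm unfolding M_def by auto
  define F where "F y = rho M ` {g \<in> H5. rho m g = y}" for y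
  have U: "rho M ` H5 = (\<Union>y \<in> rho m ` H5. F y)" unfolding F_def by auto
  have fin: "finite (rho m ` H5)" using rho_finite pm by blast
  have finF: "finite (F y)" for y
    using rho_finite[OF M0(1), of "{g \<in> H5. rho m g = y}"] unfolding F_def by simp
  have disj: "\<forall>y\<in>rho m ` H5. \<forall>y'\<in>rho m ` H5. y \<noteq> y' \<longrightarrow> F y \<inter> F y' = {}"
  proof (intro ballI impI)
    fix y y' :: r8 assume "y \<noteq> y'"
    show "F y \<inter> F y' = {}"
    proof (rule ccontr)
      assume "F y \<inter> F y' \<noteq> {}"
      then obtain z where z: "z \<in> F y" "z \<in> F y'" by blast
      obtain g where g: "g \<in> H5" "rho m g = y" "z = rho M g" using z(1) unfolding F_def by blast
      obtain g' where g': "g' \<in> H5" "rho m g' = y'" "z = rho M g'" using z(2) unfolding F_def by blast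
      have gg: "g \<in> H5" "g' \<in> H5" "rho m g = y" "rho m g' = y'" "rho M g = rho M g'"
        using g g' by auto
      hence "mat_cong (real M) g g'" using rho_eq[OF M0(1)] H5_MO by blast
      hence "mat_cong (real m) g g'" using mc_mono[OF M0(2)] by blast
      hence "rho m g = rho m g'" using rho_eq[OF pm(3)] H5_MO gg by blast
      thus False using gg \<open>y \<noteq> y'\<close> by simp
    qed
  qed
  have cF: "card (F y) = p^6" if y: "y \<in> rho m ` H5" for y
  proof -
    obtain hh where hh: "hh \<in> H5" "rho m hh = y" using y by auto
    have dh: "det2 hh = 1" "MO hh" using hh H5_det H5_MO by auto
    have S: "{g \<in> H5. rho m g = y} = (\<lambda>k. k ** hh) ` Hc m"
    proof
      show "{g \<in> H5. rho m g = y} \<subseteq> (\<lambda>k. k ** hh) ` Hc m"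
      proof
        fix g assume "g \<in> {g \<in> H5. rho m g = y}"
        hence g: "g \<in> H5" "rho m g = rho m hh" using hh by auto
        hence "g ** minv hh \<in> Hc m" using rho_eq[OF pm(3)] H5_MO hh mc_H5_iff by metis
        moreover have "g = (g ** minv hh) ** hh" using minv_left[OF dh(1)] by (simp add: matrix_mul_assoc[symmetric])
        ultimately show "g \<in> (\<lambda>k. k ** hh) ` Hc m" by blast
      qed
    next
      show "(\<lambda>k. k ** hh) ` Hc m \<subseteq> {g \<in> H5. rho m g = y}"
      proof
        fix g assume "g \<in> (\<lambda>k. k ** hh) ` Hc m"
        then obtain k where k: "k \<in> Hc m" "g = k ** hh" by auto
        have gH: "g \<in> H5" using k hh Hc_H5 H5_mult by blast
        have "g ** minv hh = k" using k minv_right[OF dh(1)] by (simp add: matrix_mul_assoc[symmetric])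
        hence "mat_cong (real m) g hh" using mc_H5_iff[OF gH hh(1)] k by simp
        hence "rho m g = rho m hh" using rho_eq[OF pm(3)] H5_MO gH hh by blast
        thus "g \<in> {g \<in> H5. rho m g = y}" using gH hh by simp
      qed
    qed
    have "F y = (\<lambda>k. rho M (k ** hh)) ` Hc m" unfolding F_def S by (simp add: image_image)
    also have "card \<dots> = card (phi p m ` Hc m)"
    proof (rule same_kernel_card)
      fix k k' assume k: "k \<in> Hc m" "k' \<in> Hc m"
      have kH: "k ** hh \<in> H5" "k' ** hh \<in> H5" using k hh Hc_H5 H5_mult by blast+
      have dk: "det2 k' = 1" using k H5_det Hc_H5 by blast
      have "(k ** hh) ** minv (k' ** hh) = k ** minv k'"
        using minv_right[OF dh(1)] by (simp add: minv_mult matrix_mul_assoc[symmetric])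
           (simp add: matrix_mul_assoc)
      hence "rho M (k ** hh) = rho M (k' ** hh) \<longleftrightarrow> k ** minv k' \<in> Hc M"
        using rho_eq[OF M0(1)] H5_MO kH mc_H5_iff[OF kH] by metis
      also have "\<dots> \<longleftrightarrow> phi p m k = phi p m k'" using phi_ker[OF pm(1,2,3) k] unfolding M_def by simp
      finally show "rho M (k ** hh) = rho M (k' ** hh) \<longleftrightarrow> phi p m k = phi p m k'" .
    qed
    also have "\<dots> = p^6" using card_Img_q[OF p h n] unfolding m_def .
    finally show ?thesis .
  qed
  have "card (rho M ` H5) = (\<Sum>y\<in>rho m ` H5. card (F y))"
    unfolding U by (rule card_UN_disjoint[OF fin]) (use finF disj in auto)
  also have "\<dots> = p^6 * card (rho m ` H5)" using cF by simp
  finally show ?thesis unfolding M_def m_def .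
qed

lemma rho_power:
  assumes p: "prime p" "odd p"
    and h: "\<exists>\<sigma>\<in>Hcong (real p). mat_cong (real p ^ 2) \<sigma> (mat2 1 (real p) 0 1)"
  shows "n \<ge> 1 \<Longrightarrow> card (rho (p^n) ` H5) = p^(6*(n-1)) * card (rho p ` H5)"
proof (induction n rule: dec_induct)
  case base thus ?case by simp
next
  case (step n)
  have "card (rho (p^Suc n) ` H5) = p^6 * card (rho (p^n) ` H5)"
    using rho_step[OF p h step(1)] by (simp only: power_Suc)
  also have "\<dots> = p^6 * p^(6*(n-1)) * card (rho p ` H5)" using step(3) by simp
  also have "\<dots> = p^(6*(Suc n - 1)) * card (rho p ` H5)"
  proof -
    have e6: "6*(Suc n - 1) = 6 + 6*(n-1)" using step(1) by simp
    have "p^6 * p^(6*(n-1)) = p^(6*(Suc n - 1))" unfolding e6 by (simp only: power_add)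
    thus ?thesis by simp
  qed
  finally show ?case .
qed

theorem proposition4p3:
  fixes p :: nat
  assumes "prime p" and "odd p"
    and "\<exists>\<sigma>\<in>Hcong (real p). mat_cong (real p ^ 2) \<sigma> (mat2 1 (real p) 0 1)"
  shows "(\<forall>n::nat. n \<ge> 1 \<longrightarrow> grp_index (Hcong (real p ^ n)) (Hcong (real p ^ (n + 1))) = p ^ 6)
       \<and> (\<forall>n::nat. n \<ge> 1 \<longrightarrow> grp_index H5 (Hcong (real p ^ n)) = p ^ (6 * (n - 1)) * grp_index H5 (Hcong (real p)))"
proof -
  have p0: "p > 0" using assms(1) prime_gt_0_nat by blast
  have conv: "real p ^ k = real (p^k)" for k by simp
  show ?thesis
  proof (intro conjI allI impI)
    fix n :: nat assume n: "n \<ge> 1"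
    have "p^(n+1) = p * p^n" by simp
    thus "grp_index (Hcong (real p ^ n)) (Hcong (real p ^ (n + 1))) = p ^ 6"
      unfolding conv using index_step[OF assms n] by simp
  next
    fix n :: nat assume n: "n \<ge> 1"
    have "grp_index H5 (Hc (p^n)) = card (rho (p^n) ` H5)" using p0 by (intro index_H5) simp
    also have "\<dots> = p^(6*(n-1)) * card (rho p ` H5)" by (rule rho_power[OF assms n])
    also have "card (rho p ` H5) = grp_index H5 (Hc p)" using index_H5[OF p0] by simp
    finally show "grp_index H5 (Hcong (real p ^ n)) = p ^ (6 * (n - 1)) * grp_index H5 (Hcong (real p))"
      unfolding conv .
  qed
qed


end
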